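(* Let $S$ be a semiring and $\Sigma$ an alphabet. The set $\mathrm{Rev}(S,\Sigma)$ is closed under addition and under both left and right scalar multiplication: if $r,s\in\mathrm{Rev}(S,\Sigma)$ and $\alpha\in S$, then $r+s$, $\alpha r$ and $r\alpha$ belong to $\mathrm{Rev}(S,\Sigma)$, where $(\alpha r,w)=\alpha\,(r,w)$ and $(r\alpha,w)=(r,w)\,\alpha$ for all $w\in\Sigma^*$.
   Context: A semiring $(S,+,\cdot,0,1)$ has $(S,+,0)$ a commutative monoid, $(S,\cdot,1)$ a monoid, $\cdot$ distributing over $+$ on both sides and $0$ absorbing. A formal power series over $S$ and a finite nonempty alphabet $\Sigma$ is a map $r\colon \Sigma^*\to S$, with value $(r,w)$ at $w$; addition is pointwise. A weighted automaton over $S$ and $\Sigma$ is $\mathcal{A}=(Q,\sigma,\iota,\tau)$ with $Q$ finite, $\sigma\colon Q\times\Sigma\times Q\to S$, $\iota,\tau\colon Q\to S$. A run on $w=a_1\cdots a_t$ is $q_0a_1q_1\cdots a_tq_t$ with all $\sigma(q_{k-1},a_k,q_k)\neq0$; its weight is $\iota(q_0)\sigma(q_0,a_1,q_1)\cdots\sigma(q_{t-1},a_t,q_t)\tau(q_t)$, and $(\|\mathcal{A}\|,w)$ is the sum of weights of all runs on $w$. $\mathcal{A}$ is reversible if for all $p,p',q,q'\in Q$, $a\in\Sigma$: (i) $\sigma(p,a,q)\neq0\neq\sigma(p,a,q')$ implies $q=q'$; (ii) $\sigma(p,a,q)\neq0\neq\sigma(p',a,q)$ implies $p=p'$. $\mathrm{Rev}(S,\Sigma)$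 is the set of series realised by reversible weighted automata over $S$ and $\Sigma$. *)

theory Defs
  imports Main
begin

text \<open>A weighted automaton over the semiring 's and the alphabet \<Sigma> (a finite nonempty
set of letters of type 'a): a finite set of states Q (states are natural numbers; every finite
state set is in bijection with such a set), transition weights sigma, initial weights iota,
final weights tau.  Values of sigma, iota, tau outside Q resp. \<Sigma> are irrelevant.\<close>

record ('a, 's) wa =
  states :: "nat set"
  trans  :: "nat \<Rightarrow> 'a \<Rightarrow> nat \<Rightarrow> 's"
  init   :: "nat \<Rightarrow> 's"
  fin    :: "nat \<Rightarrow> 's"

definition runs :: "('a, 's::zero) wa \<Rightarrow> 'a list \<Rightarrow> nat list set" where
  "runs A w = {qs. length qs = Suc (length w) \<and> set qs \<subseteq> states A \<and>
      (\<forall>k < length w. trans A (qs ! k) (w ! k) (qs ! Suc k) \<noteq> 0)}"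

definition run_weight :: "('a, 's::monoid_mult) wa \<Rightarrow> 'a list \<Rightarrow> nat list \<Rightarrow> 's" where
  "run_weight A w qs = init A (qs ! 0) *
      prod_list (map (\<lambda>k. trans A (qs ! k) (w ! k) (qs ! Suc k)) [0..<length w]) *
      fin A (qs ! length w)"

definition behaviour :: "('a, 's::{semiring_0,monoid_mult}) wa \<Rightarrow> 'a list \<Rightarrow> 's" where
  "behaviour A w = (\<Sum>qs\<in>runs A w. run_weight A w qs)"

definition reversible :: "('a, 's::zero) wa \<Rightarrow> 'a set \<Rightarrow> bool" where
  "reversible A \<Sigma> \<longleftrightarrow>
     (\<forall>p\<in>states A. \<forall>q\<in>states A. \<forall>q'\<in>states A. \<forall>a\<in>\<Sigma>.
        trans A p a q \<noteq> 0 \<and> trans A p a q' \<noteq> 0 \<longrightarrow> q = q') \<and>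
     (\<forall>p\<in>states A. \<forall>p'\<in>states A. \<forall>q\<in>states A. \<forall>a\<in>\<Sigma>.
        trans A p a q \<noteq> 0 \<and> trans A p' a q \<noteq> 0 \<longrightarrow> p = p')"

text \<open>Formal power series are maps from words to 's; only their values on \<Sigma>^* matter,
so two series are identified when they agree on lists \<Sigma>.  Rev(S, \<Sigma>):\<close>
definition Rev :: "'a set \<Rightarrow> ('a list \<Rightarrow> 's::{semiring_0,monoid_mult}) set" where
  "Rev \<Sigma> = {r. \<exists>A. finite (states A) \<and> reversible A \<Sigma> \<and>
                      (\<forall>w\<in>lists \<Sigma>. r w = behaviour A w)}"

end

theory Submission
  imports Defs
begin

definition sumwa :: "('a, 's::zero) wa \<Rightarrow> ('a, 's) wa \<Rightarrow> ('a, 's) wa" where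
  "sumwa A B = \<lparr> states = (\<lambda>q. 2*q) ` states A \<union> (\<lambda>q. 2*q+1) ` states B,
     trans = (\<lambda>p a q. if even p \<and> even q then trans A (p div 2) a (q div 2)
                     else if odd p \<and> odd q then trans B (p div 2) a (q div 2) else 0),
     init = (\<lambda>p. if even p then init A (p div 2) else init B (p div 2)),
     fin = (\<lambda>p. if even p then fin A (p div 2) else fin B (p div 2)) \<rparr>"

lemma sumwa_st_even: "p \<in> states (sumwa A B) \<Longrightarrow> even p \<Longrightarrow> p div 2 \<in> states A"
  by (auto simp: sumwa_def)

lemma sumwa_st_odd: "p \<in> states (sumwa A B) \<Longrightarrow> odd p \<Longrightarrow> p div 2 \<in> states B"
  by (auto simp: sumwa_def)

lemma finite_runs: "finite (states A) \<Longrightarrow> finite (runs A w)"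
proof -
  assume f: "finite (states A)"
  have "runs A w \<subseteq> {xs. set xs \<subseteq> states A \<and> length xs = Suc (length w)}"
    by (auto simp: runs_def)
  moreover have "finite {xs. set xs \<subseteq> states A \<and> length xs = Suc (length w)}"
    using finite_lists_length_eq[OF f] by blast
  ultimately show ?thesis by (rule finite_subset)
qed

lemma parity_run:
  assumes "qs \<in> runs (sumwa A B) w" "k < length qs"
  shows "even (qs ! k) = even (qs ! 0)"
  using assms(2)
proof (induction k)
  case 0 then show ?case by simp
next
  case (Suc k)
  have l: "length qs = Suc (length w)" using assms(1) by (simp add: runs_def)
  have "trans (sumwa A B) (qs ! k) (w ! k) (qs ! Suc k) \<noteq> 0"
    using assms(1) Suc.prems l by (simp add: runs_def)
  then have "even (qs ! k) = even (qs ! Suc k)"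
    by (auto simp: sumwa_def split: if_splits)
  then show ?case using Suc by simp
qed

lemma runs_even:
  assumes "qs \<in> runs (sumwa A B) w" "even (qs ! 0)"
  shows "qs = map (\<lambda>q. 2*q) (map (\<lambda>q. q div 2) qs) \<and> map (\<lambda>q. q div 2) qs \<in> runs A w"
proof -
  have ev: "\<And>k. k < length qs \<Longrightarrow> even (qs ! k)" using parity_run[OF assms(1)] assms(2) by blast
  have l: "length qs = Suc (length w)" using assms(1) by (simp add: runs_def)
  have e1: "qs = map (\<lambda>q. 2*q) (map (\<lambda>q. q div 2) qs)"
    by (rule nth_equalityI) (auto dest: ev)
  have "set (map (\<lambda>q. q div 2) qs) \<subseteq> states A"
  proof
    fix x assume "x \<in> set (map (\<lambda>q. q div 2) qs)"
    then obtain k where k: "k < length qs" "x = qs ! k div 2" by (auto simp: in_set_conv_nth)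
    have "qs ! k \<in> states (sumwa A B)" using assms(1) k(1) nth_mem by (force simp: runs_def)
    then show "x \<in> states A" using sumwa_st_even ev k by blast
  qed
  moreover have "\<forall>k < length w. trans A (map (\<lambda>q. q div 2) qs ! k) (w ! k) (map (\<lambda>q. q div 2) qs ! Suc k) \<noteq> 0"
  proof (intro allI impI)
    fix k assume k: "k < length w"
    have "trans (sumwa A B) (qs ! k) (w ! k) (qs ! Suc k) \<noteq> 0"
      using assms(1) k by (simp add: runs_def)
    then show "trans A (map (\<lambda>q. q div 2) qs ! k) (w ! k) (map (\<lambda>q. q div 2) qs ! Suc k) \<noteq> 0"
      using ev[of k] ev[of "Suc k"] k l by (simp add: sumwa_def)
  qed
  ultimately show ?thesis using e1 l by (simp add: runs_def)
qed

lemma runs_odd: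
  assumes "qs \<in> runs (sumwa A B) w" "odd (qs ! 0)"
  shows "qs = map (\<lambda>q. 2*q+1) (map (\<lambda>q. q div 2) qs) \<and> map (\<lambda>q. q div 2) qs \<in> runs B w"
proof -
  have ev: "\<And>k. k < length qs \<Longrightarrow> odd (qs ! k)" using parity_run[OF assms(1)] assms(2) by blast
  have l: "length qs = Suc (length w)" using assms(1) by (simp add: runs_def)
  have e1: "qs = map (\<lambda>q. 2*q+1) (map (\<lambda>q. q div 2) qs)"
    by (rule nth_equalityI) (auto dest: ev)
  have "set (map (\<lambda>q. q div 2) qs) \<subseteq> states B"
  proof
    fix x assume "x \<in> set (map (\<lambda>q. q div 2) qs)"
    then obtain k where k: "k < length qs" "x = qs ! k div 2" by (auto simp: in_set_conv_nth)
    have "qs ! k \<in> states (sumwa A B)" using assms(1) k(1) nth_mem by (force simp: runs_def)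
    then show "x \<in> states B" using sumwa_st_odd ev k by blast
  qed
  moreover have "\<forall>k < length w. trans B (map (\<lambda>q. q div 2) qs ! k) (w ! k) (map (\<lambda>q. q div 2) qs ! Suc k) \<noteq> 0"
  proof (intro allI impI)
    fix k assume k: "k < length w"
    have "trans (sumwa A B) (qs ! k) (w ! k) (qs ! Suc k) \<noteq> 0"
      using assms(1) k by (simp add: runs_def)
    then show "trans B (map (\<lambda>q. q div 2) qs ! k) (w ! k) (map (\<lambda>q. q div 2) qs ! Suc k) \<noteq> 0"
      using ev[of k] ev[of "Suc k"] k l by (simp add: sumwa_def)
  qed
  ultimately show ?thesis using e1 l by (simp add: runs_def)
qed

lemma runs_sumwa:
  "runs (sumwa A B) w = map (\<lambda>q. 2*q) ` runs A w \<union> map (\<lambda>q. 2*q+1) ` runs B w"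
proof
  show "runs (sumwa A B) w \<subseteq> map (\<lambda>q. 2*q) ` runs A w \<union> map (\<lambda>q. 2*q+1) ` runs B w"
  proof
    fix qs assume q: "qs \<in> runs (sumwa A B) w"
    show "qs \<in> map (\<lambda>q. 2*q) ` runs A w \<union> map (\<lambda>q. 2*q+1) ` runs B w"
    proof (cases "even (qs ! 0)")
      case True then show ?thesis using runs_even[OF q] by blast
    next
      case False then show ?thesis using runs_odd[OF q] by blast
    qed
  qed
next
  show "map (\<lambda>q. 2*q) ` runs A w \<union> map (\<lambda>q. 2*q+1) ` runs B w \<subseteq> runs (sumwa A B) w"
  proof
    fix qs assume "qs \<in> map (\<lambda>q. 2*q) ` runs A w \<union> map (\<lambda>q. 2*q+1) ` runs B w"
    then show "qs \<in> runs (sumwa A B) w"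
    proof
      assume "qs \<in> map (\<lambda>q. 2*q) ` runs A w"
      then obtain x where x: "x \<in> runs A w" "qs = map (\<lambda>q. 2*q) x" by blast
      have "set qs \<subseteq> states (sumwa A B)" using x by (auto simp: runs_def sumwa_def)
      then show ?thesis using x by (auto simp: runs_def sumwa_def)
    next
      assume "qs \<in> map (\<lambda>q. 2*q+1) ` runs B w"
      then obtain x where x: "x \<in> runs B w" "qs = map (\<lambda>q. 2*q+1) x" by blast
      have "set qs \<subseteq> states (sumwa A B)" using x by (auto simp: runs_def sumwa_def)
      then show ?thesis using x by (auto simp: runs_def sumwa_def)
    qed
  qed
qed

lemma rw_even: "qs \<in> runs A w \<Longrightarrow> run_weight (sumwa A B) w (map (\<lambda>q. 2*q) qs) = run_weight A w qs"
proof -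
  assume q: "qs \<in> runs A w"
  then have l: "length qs = Suc (length w)" by (simp add: runs_def)
  have "map (\<lambda>k. trans (sumwa A B) (map (\<lambda>q. 2*q) qs ! k) (w ! k) (map (\<lambda>q. 2*q) qs ! Suc k)) [0..<length w]
     = map (\<lambda>k. trans A (qs ! k) (w ! k) (qs ! Suc k)) [0..<length w]"
    by (rule map_cong) (use l in \<open>auto simp: sumwa_def\<close>)
  note eq = this
  show ?thesis unfolding run_weight_def eq using l by (simp add: sumwa_def)
qed

lemma rw_odd: "qs \<in> runs B w \<Longrightarrow> run_weight (sumwa A B) w (map (\<lambda>q. 2*q+1) qs) = run_weight B w qs"
proof -
  assume q: "qs \<in> runs B w"
  then have l: "length qs = Suc (length w)" by (simp add: runs_def)
  have "map (\<lambda>k. trans (sumwa A B) (map (\<lambda>q. 2*q+1) qs ! k) (w ! k) (map (\<lambda>q. 2*q+1) qs ! Suc k)) [0..<length w]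
     = map (\<lambda>k. trans B (qs ! k) (w ! k) (qs ! Suc k)) [0..<length w]"
    by (rule map_cong) (use l in \<open>auto simp: sumwa_def\<close>)
  note eq = this
  show ?thesis unfolding run_weight_def eq using l by (simp add: sumwa_def)
qed

lemma behaviour_sumwa:
  assumes "finite (states A)" "finite (states B)"
  shows "behaviour (sumwa A B) w = behaviour A w + behaviour B w"
proof -
  have i1: "inj_on (map (\<lambda>q. 2*q)) (runs A w)" by (auto intro!: inj_onI simp: inj_map_eq_map inj_def)
  have i2: "inj_on (map (\<lambda>q. 2*q+1)) (runs B w)" by (auto intro!: inj_onI simp: inj_map_eq_map inj_def)
  have d: "map (\<lambda>q. 2*q) ` runs A w \<inter> map (\<lambda>q. 2*q+1) ` runs B w = {}"
  proof (rule ccontr)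
    assume "\<not> ?thesis"
    then obtain x y where "x \<in> runs A w" "y \<in> runs B w" "map (\<lambda>q. 2*q) x = map (\<lambda>q. 2*q+1) y" by blast
    moreover then have "length x > 0" by (simp add: runs_def)
    ultimately have "2 * (x ! 0) = 2 * (y ! 0) + 1" by (metis length_map nth_map)
    then show False by presburger
  qed
  have "behaviour (sumwa A B) w = (\<Sum>qs\<in>map (\<lambda>q. 2*q) ` runs A w. run_weight (sumwa A B) w qs)
      + (\<Sum>qs\<in>map (\<lambda>q. 2*q+1) ` runs B w. run_weight (sumwa A B) w qs)"
    unfolding behaviour_def runs_sumwa
    by (rule sum.union_disjoint) (use d finite_runs[OF assms(1)] finite_runs[OF assms(2)] in auto)
  also have "\<dots> = behaviour A w + behaviour B w"
    unfolding behaviour_def sum.reindex[OF i1] sum.reindex[OF i2] comp_def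
    by (intro arg_cong2[where f="(+)"] sum.cong) (auto simp: rw_even rw_odd simp del: One_nat_def)
  finally show ?thesis .
qed

lemma rev_sumwa:
  assumes "reversible A \<Sigma>" "reversible B \<Sigma>"
  shows "reversible (sumwa A B) \<Sigma>"
proof -
  have dA: "\<And>p q q' a. p \<in> states A \<Longrightarrow> q \<in> states A \<Longrightarrow> q' \<in> states A \<Longrightarrow> a \<in> \<Sigma> \<Longrightarrow>
     trans A p a q \<noteq> 0 \<Longrightarrow> trans A p a q' \<noteq> 0 \<Longrightarrow> q = q'"
   and dA2: "\<And>p p' q a. p \<in> states A \<Longrightarrow> p' \<in> states A \<Longrightarrow> q \<in> states A \<Longrightarrow> a \<in> \<Sigma> \<Longrightarrow>
     trans A p a q \<noteq> 0 \<Longrightarrow> trans A p' a q \<noteq> 0 \<Longrightarrow> p = p'"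
    using assms(1) unfolding reversible_def by blast+
  have dB: "\<And>p q q' a. p \<in> states B \<Longrightarrow> q \<in> states B \<Longrightarrow> q' \<in> states B \<Longrightarrow> a \<in> \<Sigma> \<Longrightarrow>
     trans B p a q \<noteq> 0 \<Longrightarrow> trans B p a q' \<noteq> 0 \<Longrightarrow> q = q'"
   and dB2: "\<And>p p' q a. p \<in> states B \<Longrightarrow> p' \<in> states B \<Longrightarrow> q \<in> states B \<Longrightarrow> a \<in> \<Sigma> \<Longrightarrow>
     trans B p a q \<noteq> 0 \<Longrightarrow> trans B p' a q \<noteq> 0 \<Longrightarrow> p = p'"
    using assms(2) unfolding reversible_def by blast+
  show ?thesis unfolding reversible_def
  proof (intro conjI ballI impI)
    fix p q q' a assume h: "p \<in> states (sumwa A B)" "q \<in> states (sumwa A B)" "q' \<in> states (sumwa A B)" "a \<in> \<Sigma>"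
      and t: "trans (sumwa A B) p a q \<noteq> 0 \<and> trans (sumwa A B) p a q' \<noteq> 0"
    show "q = q'"
    proof (cases "even p")
      case True
      with t have e: "even q" "even q'" and tt: "trans A (p div 2) a (q div 2) \<noteq> 0" "trans A (p div 2) a (q' div 2) \<noteq> 0"
        by (auto simp: sumwa_def split: if_splits)
      have "q div 2 = q' div 2" using dA[OF sumwa_st_even[OF h(1) True] sumwa_st_even[OF h(2) e(1)] sumwa_st_even[OF h(3) e(2)] h(4) tt] .
      then show ?thesis using e by presburger
    next
      case False
      with t have e: "odd q" "odd q'" and tt: "trans B (p div 2) a (q div 2) \<noteq> 0" "trans B (p div 2) a (q' div 2) \<noteq> 0"
        by (auto simp: sumwa_def split: if_splits)
      have "q div 2 = q' div 2" using dB[OF sumwa_st_odd[OF h(1) False] sumwa_st_odd[OF h(2) e(1)] sumwa_st_odd[OF h(3) e(2)] h(4) tt] .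
      then show ?thesis using e by presburger
    qed
  next
    fix p p' q a assume h: "p \<in> states (sumwa A B)" "p' \<in> states (sumwa A B)" "q \<in> states (sumwa A B)" "a \<in> \<Sigma>"
      and t: "trans (sumwa A B) p a q \<noteq> 0 \<and> trans (sumwa A B) p' a q \<noteq> 0"
    show "p = p'"
    proof (cases "even q")
      case True
      with t have e: "even p" "even p'" and tt: "trans A (p div 2) a (q div 2) \<noteq> 0" "trans A (p' div 2) a (q div 2) \<noteq> 0"
        by (auto simp: sumwa_def split: if_splits)
      have "p div 2 = p' div 2" using dA2[OF sumwa_st_even[OF h(1) e(1)] sumwa_st_even[OF h(2) e(2)] sumwa_st_even[OF h(3) True] h(4) tt] .
      then show ?thesis using e by presburger
    next
      case False
      with t have e: "odd p" "odd p'" and tt: "trans B (p div 2) a (q div 2) \<noteq> 0" "trans B (p' div 2) a (q div 2) \<noteq> 0"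
        by (auto simp: sumwa_def split: if_splits)
      have "p div 2 = p' div 2" using dB2[OF sumwa_st_odd[OF h(1) e(1)] sumwa_st_odd[OF h(2) e(2)] sumwa_st_odd[OF h(3) False] h(4) tt] .
      then show ?thesis using e by presburger
    qed
  qed
qed

lemma behaviour_left:
  "behaviour (A\<lparr>init := (\<lambda>q. \<alpha> * init A q)\<rparr>) w = \<alpha> * behaviour A w"
  unfolding behaviour_def run_weight_def runs_def
  by (simp add: sum_distrib_left mult.assoc)

lemma behaviour_right:
  "behaviour (A\<lparr>fin := (\<lambda>q. fin A q * \<alpha>)\<rparr>) w = behaviour A w * \<alpha>"
  unfolding behaviour_def run_weight_def runs_def
  by (simp add: sum_distrib_right mult.assoc)

theorem proposition2:
  fixes \<Sigma> :: "'a set" and r s :: "'a list \<Rightarrow> 's::{semiring_0,monoid_mult}" and \<alpha> :: 's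
  assumes "finite \<Sigma>" and "\<Sigma> \<noteq> {}"
    and "r \<in> Rev \<Sigma>" and "s \<in> Rev \<Sigma>"
  shows "(\<lambda>w. r w + s w) \<in> Rev \<Sigma> \<and>
         (\<lambda>w. \<alpha> * r w) \<in> Rev \<Sigma> \<and>
         (\<lambda>w. r w * \<alpha>) \<in> Rev \<Sigma>"
proof -
  obtain A where A: "finite (states A)" "reversible A \<Sigma>" "\<forall>w\<in>lists \<Sigma>. r w = behaviour A w"
    using assms(3) unfolding Rev_def by blast
  obtain B where B: "finite (states B)" "reversible B \<Sigma>" "\<forall>w\<in>lists \<Sigma>. s w = behaviour B w"
    using assms(4) unfolding Rev_def by blast
  have 1: "(\<lambda>w. r w + s w) \<in> Rev \<Sigma>"
    unfolding Rev_def
    apply (rule CollectI, rule exI[where x="sumwa A B"])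
    using A B rev_sumwa[OF A(2) B(2)] behaviour_sumwa[OF A(1) B(1)]
    by (auto simp: sumwa_def)
  have 2: "(\<lambda>w. \<alpha> * r w) \<in> Rev \<Sigma>"
    unfolding Rev_def
    apply (rule CollectI, rule exI[where x="A\<lparr>init := (\<lambda>q. \<alpha> * init A q)\<rparr>"])
    using A behaviour_left[of \<alpha> A] by (auto simp: reversible_def)
  have 3: "(\<lambda>w. r w * \<alpha>) \<in> Rev \<Sigma>"
    unfolding Rev_def
    apply (rule CollectI, rule exI[where x="A\<lparr>fin := (\<lambda>q. fin A q * \<alpha>)\<rparr>"])
    using A behaviour_right[of A \<alpha>] by (auto simp: reversible_def)
  show ?thesis using 1 2 3 by blast
qed

end
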